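(* Let $G$ and $F$ be two nilpotent Chernikov $p$-groups, each with top $H_m$ and bottom $M^{(n)}$, and let $t,f:H_m\times H_m\to M_p^{(n)}$ be their associated commutator functions. Then $G\cong F$ if and only if there exist an automorphism $\sigma$ of $M^{(n)}$ and an automorphism $\theta$ of $H_m$ such that $f(\theta(x),\theta(y))=\sigma(t(x,y))$ for all $x,y\in H_m$.
   Context: Groups are written additively; $[u,v]=u+v-u-v$. A Chernikov $p$-group $G$ is an extension of a finite direct sum $M$ of quasi-cyclic $p$-groups (its bottom; it is the largest divisible abelian subgroup of $G$) by a finite $p$-group $H=G/M$ (its top). $M^{(n)}$ denotes the direct sum of $n$ quasi-cyclic $p$-groups, $M_p^{(n)}=\{a\in M^{(n)}:pa=0\}$, and $H_m$ is the elementary abelian $p$-group of rank $m$. For a nilpotent Chernikov $p$-group $G$ with bottom $M^{(n)}$ and top $H_m$ (so $H_m$ acts trivially on $M^{(n)}$), its commutator function is $t(x,y)=[\bar x,\bar y]$, where $\bar x,\bar y\in G$ are any preimages of $x,y\in H_m$; it is well defined and is a skew-symmetric bilinear map $H_m\times H_m\to M_p^{(n)}$. *)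

theory Defs
  imports "HOL-Algebra.Algebra"
begin

text \<open>The quasi-cyclic (Pruefer) p-group, realised as the rationals in [0,1) whose
  denominator is a power of p, under addition modulo 1.\<close>
definition prufer_group :: "nat \<Rightarrow> rat monoid" where
  "prufer_group p = \<lparr>carrier = {q::rat. 0 \<le> q \<and> q < 1 \<and> (\<exists>k::nat. q * of_nat p ^ k \<in> \<int>)},
                     monoid.mult = (\<lambda>a b. frac (a + b)),
                     one = 0\<rparr>"

definition Mn :: "nat \<Rightarrow> nat \<Rightarrow> (nat \<Rightarrow> rat) monoid" where
  "Mn p n = product_group {..<n} (\<lambda>_. prufer_group p)"

definition Hm :: "nat \<Rightarrow> nat \<Rightarrow> (nat \<Rightarrow> int) monoid" where
  "Hm p m = product_group {..<m} (\<lambda>_. integer_mod_group p)"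

definition commutator_set :: "('a, 'b) monoid_scheme \<Rightarrow> 'a set \<Rightarrow> 'a set \<Rightarrow> 'a set" where
  "commutator_set G H K =
     (\<Union>h\<in>H. \<Union>k\<in>K. {h \<otimes>\<^bsub>G\<^esub> k \<otimes>\<^bsub>G\<^esub> inv\<^bsub>G\<^esub> h \<otimes>\<^bsub>G\<^esub> inv\<^bsub>G\<^esub> k})"

fun lower_central :: "('a, 'b) monoid_scheme \<Rightarrow> nat \<Rightarrow> 'a set" where
  "lower_central G 0 = carrier G"
| "lower_central G (Suc i) = generate G (commutator_set G (lower_central G i) (carrier G))"

definition nilpotent_group :: "('a, 'b) monoid_scheme \<Rightarrow> bool" where
  "nilpotent_group G \<longleftrightarrow> group G \<and> (\<exists>c. lower_central G c = {\<one>\<^bsub>G\<^esub>})"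

definition divisible_abelian_subgroup :: "('a, 'b) monoid_scheme \<Rightarrow> 'a set \<Rightarrow> bool" where
  "divisible_abelian_subgroup G K \<longleftrightarrow>
     subgroup K G \<and> (\<forall>a\<in>K. \<forall>b\<in>K. a \<otimes>\<^bsub>G\<^esub> b = b \<otimes>\<^bsub>G\<^esub> a) \<and>
     (\<forall>x\<in>K. \<forall>k::nat. k > 0 \<longrightarrow> (\<exists>y\<in>K. y [^]\<^bsub>G\<^esub> k = x))"

definition is_bottom :: "('a, 'b) monoid_scheme \<Rightarrow> 'a set \<Rightarrow> bool" where
  "is_bottom G N \<longleftrightarrow> divisible_abelian_subgroup G N \<and>
     (\<forall>K. divisible_abelian_subgroup G K \<longrightarrow> K \<subseteq> N)"

definition nilpotent_chernikov :: "('a, 'b) monoid_scheme \<Rightarrow> nat \<Rightarrow> nat \<Rightarrow> nat \<Rightarrow>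
    'a set \<Rightarrow> ('a \<Rightarrow> nat \<Rightarrow> rat) \<Rightarrow> ('a set \<Rightarrow> nat \<Rightarrow> int) \<Rightarrow> bool" where
  "nilpotent_chernikov G p n m N \<phi> \<psi> \<longleftrightarrow>
     nilpotent_group G \<and> N \<lhd> G \<and> is_bottom G N \<and>
     \<phi> \<in> iso (G\<lparr>carrier := N\<rparr>) (Mn p n) \<and>
     \<psi> \<in> iso (G Mod N) (Hm p m)"

definition lift :: "('a, 'b) monoid_scheme \<Rightarrow> 'a set \<Rightarrow> ('a set \<Rightarrow> nat \<Rightarrow> int) \<Rightarrow>
    (nat \<Rightarrow> int) \<Rightarrow> 'a" where
  "lift G N \<psi> x = (SOME g. g \<in> carrier G \<and> \<psi> (N #>\<^bsub>G\<^esub> g) = x)"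

text \<open>t(x,y) = [xbar, ybar] = xbar + ybar - xbar - ybar (written multiplicatively),
  transported to M^(n) via phi.\<close>
definition commutator_function :: "('a, 'b) monoid_scheme \<Rightarrow> 'a set \<Rightarrow> ('a \<Rightarrow> nat \<Rightarrow> rat) \<Rightarrow>
    ('a set \<Rightarrow> nat \<Rightarrow> int) \<Rightarrow> (nat \<Rightarrow> int) \<Rightarrow> (nat \<Rightarrow> int) \<Rightarrow> (nat \<Rightarrow> rat)" where
  "commutator_function G N \<phi> \<psi> x y =
     (let u = lift G N \<psi> x; v = lift G N \<psi> y
      in \<phi> (u \<otimes>\<^bsub>G\<^esub> v \<otimes>\<^bsub>G\<^esub> inv\<^bsub>G\<^esub> u \<otimes>\<^bsub>G\<^esub> inv\<^bsub>G\<^esub> v))"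

end

theory Submission
  imports Defs
begin

lemma Hm_group: "group (Hm p m)"
  unfolding Hm_def by (rule product_group) simp

lemma Hm_carrier: "carrier (Hm p m) = (\<Pi>\<^sub>E i\<in>{..<m}. carrier (integer_mod_group p))"
  unfolding Hm_def by simp

lemma Hm_comm:
  assumes "x \<in> carrier (Hm p m)" "y \<in> carrier (Hm p m)"
  shows "x \<otimes>\<^bsub>Hm p m\<^esub> y = y \<otimes>\<^bsub>Hm p m\<^esub> x"
  unfolding Hm_def by (auto simp: add.commute)

lemma Hm_pow:
  assumes "p > 0" "x \<in> carrier (Hm p m)"
  shows "x [^]\<^bsub>Hm p m\<^esub> (k::nat) = (\<lambda>i\<in>{..<m}. (int k * x i) mod int p)"
proof (induction k)
  case 0 then show ?case using assms by (simp add: Hm_def integer_mod_group_def)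
next
  case (Suc k)
  have "x [^]\<^bsub>Hm p m\<^esub> Suc k = x [^]\<^bsub>Hm p m\<^esub> k \<otimes>\<^bsub>Hm p m\<^esub> x" by simp
  also have "\<dots> = (\<lambda>i\<in>{..<m}. (int (Suc k) * x i) mod int p)"
    unfolding Suc
  proof (rule ext)
    fix i show "((\<lambda>i\<in>{..<m}. (int k * x i) mod int p) \<otimes>\<^bsub>Hm p m\<^esub> x) i = (\<lambda>i\<in>{..<m}. (int (Suc k) * x i) mod int p) i"
      using assms by (simp add: Hm_def integer_mod_group_def mod_add_right_eq algebra_simps)
  qed
  finally show ?case .
qed

lemma Hm_pow_p:
  assumes "p > 0" "x \<in> carrier (Hm p m)"
  shows "x [^]\<^bsub>Hm p m\<^esub> p = \<one>\<^bsub>Hm p m\<^esub>"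
  using assms by (simp add: Hm_pow) (simp add: Hm_def integer_mod_group_def)

lemma Hm_finite: "p > 0 \<Longrightarrow> finite (carrier (Hm p m))"
  unfolding Hm_carrier by (auto intro!: finite_PiE simp: carrier_integer_mod_group)

locale NC =
  fixes G (structure) and p n m :: nat and N and \<phi> and \<psi>
  assumes prime_p: "Factorial_Ring.prime p"
    and nc: "nilpotent_chernikov G p n m N \<phi> \<psi>"
begin

lemma grp: "group G" using nc by (simp add: nilpotent_chernikov_def nilpotent_group_def)

sublocale group G by (rule grp)

lemma p_pos: "p > 0" using prime_p by (simp add: prime_gt_0_nat)

lemma nrm: "normal N G" using nc by (simp add: nilpotent_chernikov_def)
lemma sgN: "subgroup N G" using nrm normal_def by blast
lemma N_sub: "N \<subseteq> carrier G" using sgN subgroup.subset by blast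
lemma bottom: "is_bottom G N" using nc by (simp add: nilpotent_chernikov_def)
lemma dasN: "divisible_abelian_subgroup G N" using bottom is_bottom_def by blast
lemma N_comm: "a \<in> N \<Longrightarrow> b \<in> N \<Longrightarrow> a \<otimes> b = b \<otimes> a"
  using dasN[unfolded divisible_abelian_subgroup_def] by blast
lemma N_div: "x \<in> N \<Longrightarrow> (k::nat) > 0 \<Longrightarrow> \<exists>y\<in>N. y [^] k = x"
  using dasN[unfolded divisible_abelian_subgroup_def] by blast
lemma phi_iso: "\<phi> \<in> iso (G\<lparr>carrier := N\<rparr>) (Mn p n)" using nc by (simp add: nilpotent_chernikov_def)
lemma psi_iso: "\<psi> \<in> iso (G Mod N) (Hm p m)" using nc by (simp add: nilpotent_chernikov_def)

lemma Mod_group: "group (G Mod N)" using nrm normal.factorgroup_is_group by blast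

definition \<pi> where "\<pi> g = \<psi> (N #> g)"

lemma pi_hom: "\<pi> \<in> hom G (Hm p m)"
proof -
  have h: "\<psi> \<in> hom (G Mod N) (Hm p m)" using psi_iso iso_imp_homomorphism by blast
  have c: "N #> a \<in> carrier (G Mod N)" if "a \<in> carrier G" for a
    using that by (auto simp: carrier_FactGroup)
  show ?thesis unfolding hom_def
  proof safe
    fix a assume "a \<in> carrier G" then show "\<pi> a \<in> carrier (Hm p m)"
      using c h unfolding \<pi>_def hom_def by blast
  next
    fix a b assume a: "a \<in> carrier G" and b: "b \<in> carrier G"
    have "\<pi> (a \<otimes> b) = \<psi> ((N #> a) \<otimes>\<^bsub>G Mod N\<^esub> (N #> b))"
      unfolding \<pi>_def using a b by (simp add: normal.rcos_sum[OF nrm])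
    also have "\<dots> = \<pi> a \<otimes>\<^bsub>Hm p m\<^esub> \<pi> b"
      unfolding \<pi>_def using hom_mult[OF h c[OF a] c[OF b]] by simp
    finally show "\<pi> (a \<otimes> b) = \<pi> a \<otimes>\<^bsub>Hm p m\<^esub> \<pi> b" .
  qed
qed

lemma pi_gh: "group_hom G (Hm p m) \<pi>"
  by (simp add: group_hom_def group_hom_axioms_def pi_hom grp Hm_group)

lemma pi_closed: "g \<in> carrier G \<Longrightarrow> \<pi> g \<in> carrier (Hm p m)"
  using pi_hom by (auto simp: hom_def)
lemma pi_mult: "a \<in> carrier G \<Longrightarrow> b \<in> carrier G \<Longrightarrow> \<pi> (a \<otimes> b) = \<pi> a \<otimes>\<^bsub>Hm p m\<^esub> \<pi> b"
  by (rule hom_mult[OF pi_hom])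
lemma pi_inv: "a \<in> carrier G \<Longrightarrow> \<pi> (inv a) = inv\<^bsub>Hm p m\<^esub> \<pi> a"
  using group_hom.hom_inv[OF pi_gh] by blast
lemma pi_one: "\<pi> \<one> = \<one>\<^bsub>Hm p m\<^esub>"
  using group_hom.hom_one[OF pi_gh] by blast
lemma pi_pow: "a \<in> carrier G \<Longrightarrow> \<pi> (a [^] (k::nat)) = \<pi> a [^]\<^bsub>Hm p m\<^esub> k"
  using group_hom.hom_nat_pow[OF pi_gh] by blast

lemma pi_surj: "\<pi> ` carrier G = carrier (Hm p m)"
proof -
  have "\<psi> ` carrier (G Mod N) = carrier (Hm p m)" using psi_iso by (simp add: iso_iff)
  then show ?thesis unfolding \<pi>_def carrier_FactGroup by (simp add: image_image)
qed

lemma pi_ker: "g \<in> carrier G \<Longrightarrow> \<pi> g = \<one>\<^bsub>Hm p m\<^esub> \<longleftrightarrow> g \<in> N"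
proof -
  assume g: "g \<in> carrier G"
  have inj: "inj_on \<psi> (carrier (G Mod N))" using psi_iso by (simp add: iso_iff)
  have h: "\<psi> \<in> hom (G Mod N) (Hm p m)" using psi_iso iso_imp_homomorphism by blast
  have one: "\<psi> N = \<one>\<^bsub>Hm p m\<^esub>"
    using hom_one[OF h Mod_group Hm_group] by simp
  have c1: "N #> g \<in> carrier (G Mod N)" using g by (auto simp: carrier_FactGroup)
  have c2: "N \<in> carrier (G Mod N)" using monoid.one_closed[OF group.is_monoid[OF Mod_group]] by simp
  have "\<pi> g = \<one>\<^bsub>Hm p m\<^esub> \<longleftrightarrow> N #> g = N"
    unfolding \<pi>_def using inj c1 c2 one inj_on_eq_iff by metis
  also have "\<dots> \<longleftrightarrow> g \<in> N"
    using coset_join1[OF _ g sgN] subgroup.rcos_const[OF sgN grp] by blast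
  finally show ?thesis .
qed

lemma pi_eq: "a \<in> carrier G \<Longrightarrow> b \<in> carrier G \<Longrightarrow> \<pi> a = \<pi> b \<longleftrightarrow> inv a \<otimes> b \<in> N"
proof -
  assume a: "a \<in> carrier G" and b: "b \<in> carrier G"
  have "\<pi> (inv a \<otimes> b) = inv\<^bsub>Hm p m\<^esub> \<pi> a \<otimes>\<^bsub>Hm p m\<^esub> \<pi> b"
    using a b pi_mult pi_inv by simp
  moreover have "inv\<^bsub>Hm p m\<^esub> \<pi> a \<otimes>\<^bsub>Hm p m\<^esub> \<pi> b = \<one>\<^bsub>Hm p m\<^esub> \<longleftrightarrow> \<pi> a = \<pi> b"
    using a b pi_closed group.inv_comm group.l_inv group.inv_equality Hm_group
    by (metis group.inv_closed group.inv_inv)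
  ultimately show ?thesis using pi_ker[of "inv a \<otimes> b"] a b by auto
qed

lemma lift_spec:
  assumes "x \<in> carrier (Hm p m)"
  shows "lift G N \<psi> x \<in> carrier G \<and> \<pi> (lift G N \<psi> x) = x"
proof -
  from assms pi_surj obtain g where g: "g \<in> carrier G" "\<pi> g = x" by (metis imageE)
  hence "\<exists>g. g \<in> carrier G \<and> \<psi> (N #> g) = x" unfolding \<pi>_def by blast
  from someI_ex[OF this] show ?thesis unfolding lift_def \<pi>_def .
qed

end


definition cm :: "('a, 'b) monoid_scheme \<Rightarrow> 'a \<Rightarrow> 'a \<Rightarrow> 'a" where
  "cm G a b = a \<otimes>\<^bsub>G\<^esub> b \<otimes>\<^bsub>G\<^esub> inv\<^bsub>G\<^esub> a \<otimes>\<^bsub>G\<^esub> inv\<^bsub>G\<^esub> b"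

context group begin
lemma gcan1 [simp]: "x \<in> carrier G \<Longrightarrow> y \<in> carrier G \<Longrightarrow> inv x \<otimes> (x \<otimes> y) = y"
  by (simp add: m_assoc[symmetric])
lemma gcan2 [simp]: "x \<in> carrier G \<Longrightarrow> y \<in> carrier G \<Longrightarrow> x \<otimes> (inv x \<otimes> y) = y"
  by (simp add: m_assoc[symmetric])
lemma comm_one_iff: "a \<in> carrier G \<Longrightarrow> b \<in> carrier G \<Longrightarrow> a \<otimes> b \<otimes> inv a \<otimes> inv b = \<one> \<longleftrightarrow> a \<otimes> b = b \<otimes> a"
  using inv_solve_right'[of "\<one>" "a \<otimes> b \<otimes> inv a" b] inv_solve_right'[of b "a \<otimes> b" a] by simp
end

context NC begin

lemma N_pow: "x \<in> N \<Longrightarrow> x [^] (k::nat) \<in> N"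
  by (induction k) (auto intro: subgroup.m_closed[OF sgN] subgroup.one_closed[OF sgN])

definition \<delta> :: "'a \<Rightarrow> 'a \<Rightarrow> 'a" where "\<delta> g x = x \<otimes> g \<otimes> inv x \<otimes> inv g"

lemma delta_N: "g \<in> carrier G \<Longrightarrow> x \<in> N \<Longrightarrow> \<delta> g x \<in> N"
proof -
  assume g: "g \<in> carrier G" and x: "x \<in> N"
  have xc: "x \<in> carrier G" using x N_sub by blast
  have "g \<otimes> inv x \<otimes> inv g \<in> N"
    using normal.inv_op_closed2[OF nrm g] x subgroup.m_inv_closed[OF sgN] by blast
  then have "x \<otimes> (g \<otimes> inv x \<otimes> inv g) \<in> N" using x subgroup.m_closed[OF sgN] by blast
  then show ?thesis unfolding \<delta>_def using g xc by (simp add: m_assoc)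
qed

lemma delta_mult: "g \<in> carrier G \<Longrightarrow> a \<in> N \<Longrightarrow> b \<in> N \<Longrightarrow> \<delta> g (a \<otimes> b) = \<delta> g a \<otimes> \<delta> g b"
proof -
  assume g: "g \<in> carrier G" and a: "a \<in> N" and b: "b \<in> N"
  have ac: "a \<in> carrier G" and bc: "b \<in> carrier G" using a b N_sub by auto
  have cN: "g \<otimes> inv a \<otimes> inv g \<in> N"
    using normal.inv_op_closed2[OF nrm g] a subgroup.m_inv_closed[OF sgN] by blast
  have "\<delta> g (a \<otimes> b) = a \<otimes> \<delta> g b \<otimes> (g \<otimes> inv a \<otimes> inv g)"
    unfolding \<delta>_def using g ac bc by (simp add: m_assoc inv_mult_group)
  also have "\<dots> = \<delta> g b \<otimes> (a \<otimes> (g \<otimes> inv a \<otimes> inv g))"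
    using N_comm[OF a delta_N[OF g b]] g ac bc delta_N[OF g b] N_sub
    by (metis cN m_assoc subsetD)
  also have "a \<otimes> (g \<otimes> inv a \<otimes> inv g) = \<delta> g a"
    unfolding \<delta>_def using g ac by (simp add: m_assoc)
  finally show ?thesis using N_comm delta_N a b g by metis
qed

lemma delta_one: "g \<in> carrier G \<Longrightarrow> \<delta> g \<one> = \<one>"
  unfolding \<delta>_def by simp

lemma delta_pow: "g \<in> carrier G \<Longrightarrow> x \<in> N \<Longrightarrow> \<delta> g (x [^] (k::nat)) = \<delta> g x [^] k"
proof (induction k)
  case 0 then show ?case by (simp add: delta_one)
next
  case (Suc k)
  have "x [^] k \<in> N" using Suc.prems N_pow by blast
  then show ?case using Suc by (simp add: delta_mult)
qed

lemma deltaj_N: "g \<in> carrier G \<Longrightarrow> x \<in> N \<Longrightarrow> (\<delta> g ^^ j) x \<in> N"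
  by (induction j) (auto simp: delta_N)

lemma deltaj_pow: "g \<in> carrier G \<Longrightarrow> x \<in> N \<Longrightarrow> (\<delta> g ^^ j) (x [^] (k::nat)) = ((\<delta> g ^^ j) x) [^] k"
  by (induction j) (auto simp: delta_pow deltaj_N)

lemma deltaj_lc: "g \<in> carrier G \<Longrightarrow> x \<in> N \<Longrightarrow> (\<delta> g ^^ j) x \<in> lower_central G j"
proof (induction j)
  case 0 then show ?case using N_sub by auto
next
  case (Suc j)
  have "(\<delta> g ^^ Suc j) x \<in> commutator_set G (lower_central G j) (carrier G)"
    using Suc unfolding commutator_set_def \<delta>_def by auto
  then show ?case by (simp add: generate.incl)
qed

lemma delta_nil: "g \<in> carrier G \<Longrightarrow> \<exists>c. \<forall>x\<in>N. (\<delta> g ^^ c) x = \<one>"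
proof -
  assume g: "g \<in> carrier G"
  obtain c where "lower_central G c = {\<one>}"
    using nc unfolding nilpotent_chernikov_def nilpotent_group_def by blast
  then show ?thesis using deltaj_lc[OF g] by blast
qed

lemma pow_p_in_N: "g \<in> carrier G \<Longrightarrow> g [^] p \<in> N"
  using pi_ker[of "g [^] p"] pi_pow Hm_pow_p p_pos pi_closed by simp

lemma delta_step:
  assumes g: "g \<in> carrier G" and h: "\<forall>x\<in>N. (\<delta> g ^^ Suc (Suc i)) x = \<one>"
  shows "\<forall>x\<in>N. (\<delta> g ^^ Suc i) x = \<one>"
proof
  fix x assume x: "x \<in> N"
  obtain w where w: "w \<in> N" "w [^] p = x" using N_div[OF x] p_pos by blast
  define k where "k = (\<delta> g ^^ i) w"
  define e where "e = \<delta> g k"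
  have kN: "k \<in> N" unfolding k_def using deltaj_N g w by blast
  have eN: "e \<in> N" unfolding e_def using delta_N g kN by blast
  have kc: "k \<in> carrier G" and ec: "e \<in> carrier G" using kN eN N_sub by auto
  have de: "\<delta> g e = \<one>" using h w unfolding e_def k_def by simp
  have eg: "e \<otimes> g = g \<otimes> e" using de comm_one_iff[OF ec g] unfolding \<delta>_def by simp
  define u where "u = inv k"
  have uN: "u \<in> N" unfolding u_def using kN subgroup.m_inv_closed[OF sgN] by blast
  have uc: "u \<in> carrier G" using uN N_sub by auto
  have gu: "g \<otimes> u = u \<otimes> e \<otimes> g"
  proof -
    have "k \<otimes> g \<otimes> inv k \<otimes> inv g = e" using e_def \<delta>_def by simp
    then have "k \<otimes> (g \<otimes> u) = e \<otimes> g" unfolding u_def using kc g ec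
      by (metis inv_closed inv_solve_right' m_assoc m_closed)
    then have "g \<otimes> u = inv k \<otimes> (e \<otimes> g)" using kc g uc ec
      by (metis inv_solve_left m_closed)
    then show ?thesis unfolding u_def using kc ec g by (simp add: m_assoc)
  qed
  have gj: "g [^] j \<otimes> u = u \<otimes> e [^] j \<otimes> g [^] j" for j :: nat
  proof (induction j)
    case 0 then show ?case using uc by simp
  next
    case (Suc j)
    have "g [^] Suc j \<otimes> u = g \<otimes> (g [^] j \<otimes> u)" using g uc by (subst nat_pow_Suc2) (simp_all add: m_assoc)
    also have "\<dots> = g \<otimes> u \<otimes> e [^] j \<otimes> g [^] j" using Suc g uc ec by (simp add: m_assoc)
    also have "\<dots> = u \<otimes> e \<otimes> (g \<otimes> e [^] j) \<otimes> g [^] j" using gu g uc ec by (simp add: m_assoc)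
    also have "g \<otimes> e [^] j = e [^] j \<otimes> g" using group_commutes_pow[OF eg ec g] by simp
    also have "u \<otimes> e \<otimes> (e [^] j \<otimes> g) \<otimes> g [^] j = u \<otimes> e [^] Suc j \<otimes> g [^] Suc j"
      using g uc ec nat_pow_Suc2[OF g, of j] nat_pow_Suc2[OF ec, of j]
      by (simp only: m_assoc nat_pow_closed m_closed)
    finally show ?case .
  qed
  have gp: "g [^] p \<in> N" using pow_p_in_N g by blast
  have "u \<otimes> g [^] p = u \<otimes> e [^] p \<otimes> g [^] p"
    using gj[of p] N_comm[OF gp uN] by simp
  then have ep: "e [^] p = \<one>" using uc ec g
    by (metis l_cancel_one' m_closed nat_pow_closed r_cancel)
  have "(\<delta> g ^^ Suc i) x = ((\<delta> g ^^ Suc i) w) [^] p" using deltaj_pow g w by metis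
  also have "(\<delta> g ^^ Suc i) w = e" unfolding e_def k_def by simp
  finally show "(\<delta> g ^^ Suc i) x = \<one>" using ep by simp
qed

lemma central: "x \<in> N \<Longrightarrow> g \<in> carrier G \<Longrightarrow> x \<otimes> g = g \<otimes> x"
proof -
  assume x: "x \<in> N" and g: "g \<in> carrier G"
  obtain c where c: "\<forall>x\<in>N. (\<delta> g ^^ c) x = \<one>" using delta_nil g by blast
  have c1: "\<forall>x\<in>N. (\<delta> g ^^ Suc c) x = \<one>" using c g delta_one by simp
  have "\<forall>x\<in>N. (\<delta> g ^^ Suc d) x = \<one> \<Longrightarrow> \<forall>x\<in>N. (\<delta> g ^^ Suc 0) x = \<one>" for d
    by (induction d) (use delta_step g in blast)+
  from this[OF c1] x have "\<delta> g x = \<one>" by simp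
  then show ?thesis using comm_one_iff x g N_sub unfolding \<delta>_def by blast
qed

lemma cm_in_N: "a \<in> carrier G \<Longrightarrow> b \<in> carrier G \<Longrightarrow> cm G a b \<in> N"
proof -
  assume a: "a \<in> carrier G" and b: "b \<in> carrier G"
  have "\<pi> (cm G a b) = \<pi> a \<otimes>\<^bsub>Hm p m\<^esub> \<pi> b \<otimes>\<^bsub>Hm p m\<^esub> inv\<^bsub>Hm p m\<^esub> \<pi> a \<otimes>\<^bsub>Hm p m\<^esub> inv\<^bsub>Hm p m\<^esub> \<pi> b"
    unfolding cm_def using a b by (simp add: pi_mult pi_inv)
  also have "\<dots> = \<one>\<^bsub>Hm p m\<^esub>"
    using group.comm_one_iff[OF Hm_group] Hm_comm pi_closed a b by blast
  finally show ?thesis using pi_ker a b unfolding cm_def by simp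
qed

lemma cm_central_left: "a \<in> carrier G \<Longrightarrow> b \<in> carrier G \<Longrightarrow> x \<in> N \<Longrightarrow> cm G (a \<otimes> x) b = cm G a b"
proof -
  assume a: "a \<in> carrier G" and b: "b \<in> carrier G" and x: "x \<in> N"
  have xc: "x \<in> carrier G" using x N_sub by blast
  have xb: "x \<otimes> b = b \<otimes> x" using central x b by blast
  have "cm G (a \<otimes> x) b = a \<otimes> (x \<otimes> b) \<otimes> inv x \<otimes> inv a \<otimes> inv b"
    unfolding cm_def using a b xc by (simp add: m_assoc inv_mult_group)
  also have "\<dots> = a \<otimes> (b \<otimes> x) \<otimes> inv x \<otimes> inv a \<otimes> inv b" using xb by simp
  also have "\<dots> = cm G a b" unfolding cm_def using a b xc by (simp add: m_assoc)
  finally show ?thesis .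
qed

lemma cm_central_right: "a \<in> carrier G \<Longrightarrow> b \<in> carrier G \<Longrightarrow> y \<in> N \<Longrightarrow> cm G a (b \<otimes> y) = cm G a b"
proof -
  assume a: "a \<in> carrier G" and b: "b \<in> carrier G" and y: "y \<in> N"
  have yc: "y \<in> carrier G" using y N_sub by blast
  have ya: "y \<otimes> inv a = inv a \<otimes> y" using central y a by blast
  have "cm G a (b \<otimes> y) = a \<otimes> b \<otimes> (y \<otimes> inv a) \<otimes> inv y \<otimes> inv b"
    unfolding cm_def using a b yc by (simp add: m_assoc inv_mult_group)
  also have "\<dots> = a \<otimes> b \<otimes> (inv a \<otimes> y) \<otimes> inv y \<otimes> inv b" using ya by simp
  also have "\<dots> = cm G a b" unfolding cm_def using a b yc by (simp add: m_assoc)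
  finally show ?thesis .
qed

lemma cm_welldef:
  assumes "a \<in> carrier G" "b \<in> carrier G" "a' \<in> carrier G" "b' \<in> carrier G"
    and "\<pi> a = \<pi> a'" "\<pi> b = \<pi> b'"
  shows "cm G a b = cm G a' b'"
proof -
  have x: "inv a \<otimes> a' \<in> N" and y: "inv b \<otimes> b' \<in> N" using assms pi_eq by auto
  have "a' = a \<otimes> (inv a \<otimes> a')" "b' = b \<otimes> (inv b \<otimes> b')" using assms by simp_all
  then have "cm G a' b' = cm G (a \<otimes> (inv a \<otimes> a')) (b \<otimes> (inv b \<otimes> b'))" by simp
  also have "\<dots> = cm G a b" using cm_central_left cm_central_right x y assms N_sub
    by (metis m_closed subsetD inv_closed)
  finally show ?thesis by simp
qed

lemma cf_eq:
  assumes "a \<in> carrier G" "b \<in> carrier G"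
  shows "commutator_function G N \<phi> \<psi> (\<pi> a) (\<pi> b) = \<phi> (cm G a b)"
proof -
  have "lift G N \<psi> (\<pi> a) \<in> carrier G \<and> \<pi> (lift G N \<psi> (\<pi> a)) = \<pi> a"
       "lift G N \<psi> (\<pi> b) \<in> carrier G \<and> \<pi> (lift G N \<psi> (\<pi> b)) = \<pi> b"
    using lift_spec pi_closed assms by auto
  then show ?thesis unfolding commutator_function_def Let_def cm_def[symmetric]
    using cm_welldef assms by metis
qed

lemma good_lift:
  assumes g0: "g0 \<in> carrier G"
  shows "\<exists>g\<in>carrier G. \<pi> g = \<pi> g0 \<and> g [^] p = \<one>"
proof -
  have "g0 [^] p \<in> N" using pow_p_in_N g0 by blast
  then obtain y where y: "y \<in> N" "y [^] p = g0 [^] p" using N_div p_pos by blast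
  have yc: "y \<in> carrier G" using y N_sub by blast
  define g where "g = g0 \<otimes> inv y"
  have gc: "g \<in> carrier G" unfolding g_def using g0 yc by simp
  have iyN: "inv y \<in> N" using y subgroup.m_inv_closed[OF sgN] by blast
  have "\<pi> g = \<pi> g0" unfolding g_def using pi_eq[of g0 "g0 \<otimes> inv y"] g0 yc iyN
    by (simp add: m_assoc[symmetric])
  moreover have "g [^] p = \<one>"
  proof -
    have "g [^] p = g0 [^] p \<otimes> inv y [^] p" unfolding g_def
      using pow_mult_distrib[of g0 "inv y" p] central[OF iyN g0] g0 yc by simp
    also have "\<dots> = g0 [^] p \<otimes> inv (g0 [^] p)" using y yc by (simp add: nat_pow_inv)
    finally show ?thesis using g0 by simp
  qed
  ultimately show ?thesis using gc by blast
qed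

lemma phi_mult: "a \<in> N \<Longrightarrow> b \<in> N \<Longrightarrow> \<phi> (a \<otimes> b) = \<phi> a \<otimes>\<^bsub>Mn p n\<^esub> \<phi> b"
  using phi_iso unfolding iso_def hom_def by simp
lemma phi_bij: "bij_betw \<phi> N (carrier (Mn p n))"
  using phi_iso unfolding iso_def by simp

end

lemma bez_prime:
  fixes p k :: nat
  assumes "Factorial_Ring.prime p" "\<not> p dvd k"
  shows "\<exists>a b. k * a = p * b + 1"
proof -
  have k: "k \<noteq> 0" using assms(2) by (metis dvd_0_right)
  have "coprime p k" using prime_imp_coprime assms by blast
  then have "gcd k p = 1" by (simp add: coprime_iff_gcd_eq_1 gcd.commute)
  then show ?thesis using bezout_nat[OF k, of p] by simp
qed

context group begin
lemma cm_swap: "x \<in> carrier G \<Longrightarrow> y \<in> carrier G \<Longrightarrow> x \<otimes> y = cm G x y \<otimes> y \<otimes> x"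
  unfolding cm_def by (simp add: m_assoc)

lemma pow_inv_p:
  assumes x: "x \<in> carrier G" and xp: "x [^] p = \<one>" and p: "p > 0"
  shows "inv (x [^] (k::nat)) = x [^] (k * (p - 1))"
proof -
  have "x [^] (k * (p - 1)) \<otimes> x [^] k = x [^] (k * p)"
    using x p by (simp add: nat_pow_mult algebra_simps)
  also have "\<dots> = (x [^] p) [^] k" using x by (simp add: nat_pow_pow mult.commute)
  also have "\<dots> = \<one>" using xp by simp
  finally show ?thesis using x inv_equality by simp
qed

lemma pow_bez:
  assumes x: "x \<in> carrier G" and xp: "x [^] p = \<one>" and e: "k * a = p * b + (1::nat)"
  shows "(x [^] k) [^] a = x"
proof -
  have "(x [^] k) [^] a = x [^] (p * b + 1)" using x e by (simp add: nat_pow_pow)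
  also have "\<dots> = (x [^] p) [^] b \<otimes> x" using x by (simp add: nat_pow_pow nat_pow_mult[symmetric])
  finally show ?thesis using xp x by simp
qed
end

locale BW = G: NC G p n m NG \<phi>G \<psi>G + F: NC F p n m NF \<phi>F \<psi>F
  for G :: "('a, 'b) monoid_scheme" and F :: "('c, 'd) monoid_scheme"
    and p n m NG \<phi>G \<psi>G NF \<phi>F \<psi>F +
  fixes \<sigma> \<theta>
  assumes sig: "\<sigma> \<in> iso (Mn p n) (Mn p n)" and the: "\<theta> \<in> iso (Hm p m) (Hm p m)"
    and hyp: "\<forall>x\<in>carrier (Hm p m). \<forall>y\<in>carrier (Hm p m).
          commutator_function F NF \<phi>F \<psi>F (\<theta> x) (\<theta> y) =
          \<sigma> (commutator_function G NG \<phi>G \<psi>G x y)"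
begin

abbreviation "H \<equiv> Hm p m"

definition \<tau> where "\<tau> = inv_into NF \<phi>F \<circ> (\<sigma> \<circ> \<phi>G)"

lemma tau_iso: "\<tau> \<in> iso (G\<lparr>carrier := NG\<rparr>) (F\<lparr>carrier := NF\<rparr>)"
proof -
  have gF: "group (F\<lparr>carrier := NF\<rparr>)" using F.subgroup_imp_group[OF F.sgN] .
  have "inv_into (carrier (F\<lparr>carrier := NF\<rparr>)) \<phi>F \<in> iso (Mn p n) (F\<lparr>carrier := NF\<rparr>)"
    using group.iso_set_sym[OF gF F.phi_iso] .
  then have i: "inv_into NF \<phi>F \<in> iso (Mn p n) (F\<lparr>carrier := NF\<rparr>)" by simp
  show ?thesis unfolding \<tau>_def using iso_set_trans[OF iso_set_trans[OF G.phi_iso sig] i] .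
qed

lemma tau_closed: "x \<in> NG \<Longrightarrow> \<tau> x \<in> NF"
  using tau_iso unfolding iso_def hom_def by auto
lemma tau_mult: "x \<in> NG \<Longrightarrow> y \<in> NG \<Longrightarrow> \<tau> (x \<otimes>\<^bsub>G\<^esub> y) = \<tau> x \<otimes>\<^bsub>F\<^esub> \<tau> y"
  using tau_iso unfolding iso_def hom_def by auto
lemma tau_bij: "bij_betw \<tau> NG NF"
  using tau_iso unfolding iso_def by auto
lemma tau_one: "\<tau> \<one>\<^bsub>G\<^esub> = \<one>\<^bsub>F\<^esub>"
proof -
  have o: "\<one>\<^bsub>G\<^esub> \<in> NG" using subgroup.one_closed[OF G.sgN] .
  have c: "\<tau> \<one>\<^bsub>G\<^esub> \<in> carrier F" using tau_closed[OF o] F.N_sub by blast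
  have "\<tau> \<one>\<^bsub>G\<^esub> \<otimes>\<^bsub>F\<^esub> \<tau> \<one>\<^bsub>G\<^esub> = \<tau> \<one>\<^bsub>G\<^esub>" using tau_mult[OF o o] by simp
  then show ?thesis using c by simp
qed
lemma tau_inv: "x \<in> NG \<Longrightarrow> \<tau> (inv\<^bsub>G\<^esub> x) = inv\<^bsub>F\<^esub> \<tau> x"
proof -
  assume x: "x \<in> NG"
  have ix: "inv\<^bsub>G\<^esub> x \<in> NG" using subgroup.m_inv_closed[OF G.sgN x] .
  have xc: "x \<in> carrier G" using x G.N_sub by blast
  have "\<tau> (inv\<^bsub>G\<^esub> x) \<otimes>\<^bsub>F\<^esub> \<tau> x = \<one>\<^bsub>F\<^esub>" using tau_mult[OF ix x] xc tau_one by simp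
  then show ?thesis using tau_closed x ix F.N_sub F.inv_equality by (metis subsetD)
qed
lemma phiF_tau: "x \<in> NG \<Longrightarrow> \<phi>F (\<tau> x) = \<sigma> (\<phi>G x)"
proof -
  assume x: "x \<in> NG"
  have "\<phi>G x \<in> carrier (Mn p n)" using bij_betwE[OF G.phi_bij] x by blast
  then have "\<sigma> (\<phi>G x) \<in> carrier (Mn p n)" using sig unfolding iso_def hom_def by auto
  then have "\<sigma> (\<phi>G x) \<in> \<phi>F ` NF" using F.phi_bij bij_betw_imp_surj_on by blast
  then show ?thesis unfolding \<tau>_def by (simp add: f_inv_into_f)
qed

lemma th_hom: "\<theta> \<in> hom H H" using the iso_imp_homomorphism by blast
lemma th_closed: "x \<in> carrier H \<Longrightarrow> \<theta> x \<in> carrier H" using th_hom by (auto simp: hom_def)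
lemma th_mult: "x \<in> carrier H \<Longrightarrow> y \<in> carrier H \<Longrightarrow> \<theta> (x \<otimes>\<^bsub>H\<^esub> y) = \<theta> x \<otimes>\<^bsub>H\<^esub> \<theta> y"
  by (rule hom_mult[OF th_hom])
lemma th_pow: "x \<in> carrier H \<Longrightarrow> \<theta> (x [^]\<^bsub>H\<^esub> (k::nat)) = \<theta> x [^]\<^bsub>H\<^esub> k"
  using hom_nat_pow[OF th_hom _ Hm_group Hm_group] by blast
lemma th_one: "\<theta> \<one>\<^bsub>H\<^esub> = \<one>\<^bsub>H\<^esub>" using hom_one[OF th_hom Hm_group Hm_group] .
lemma th_inj: "inj_on \<theta> (carrier H)" using the by (simp add: iso_iff)
lemma th_surj: "\<theta> ` carrier H = carrier H" using the by (simp add: iso_iff)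

lemma key:
  assumes a: "a \<in> carrier G" and b: "b \<in> carrier G" and a': "a' \<in> carrier F" and b': "b' \<in> carrier F"
    and ea: "F.\<pi> a' = \<theta> (G.\<pi> a)" and eb: "F.\<pi> b' = \<theta> (G.\<pi> b)"
  shows "cm F a' b' = \<tau> (cm G a b)"
proof -
  have "\<phi>F (cm F a' b') = commutator_function F NF \<phi>F \<psi>F (F.\<pi> a') (F.\<pi> b')"
    using F.cf_eq a' b' by simp
  also have "\<dots> = \<sigma> (commutator_function G NG \<phi>G \<psi>G (G.\<pi> a) (G.\<pi> b))"
    unfolding ea eb using hyp G.pi_closed[OF a] G.pi_closed[OF b] by blast
  also have "\<dots> = \<sigma> (\<phi>G (cm G a b))" using G.cf_eq a b by simp
  also have "\<dots> = \<phi>F (\<tau> (cm G a b))" using phiF_tau G.cm_in_N a b by simp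
  finally have e: "\<phi>F (cm F a' b') = \<phi>F (\<tau> (cm G a b))" .
  have "cm F a' b' \<in> NF" "\<tau> (cm G a b) \<in> NF" using F.cm_in_N a' b' tau_closed G.cm_in_N a b by auto
  then show ?thesis using e F.phi_bij unfolding bij_betw_def by (meson inj_onD)
qed

definition Cs where "Cs = {(x, \<tau> x) | x. x \<in> NG}"

definition adm where "adm T \<longleftrightarrow> T \<subseteq> carrier G \<times> carrier F \<and> Cs \<subseteq> T \<and>
   (\<forall>g1 h1 g2 h2. (g1, h1) \<in> T \<longrightarrow> (g2, h2) \<in> T \<longrightarrow> (g1 \<otimes>\<^bsub>G\<^esub> g2, h1 \<otimes>\<^bsub>F\<^esub> h2) \<in> T) \<and>
   (\<forall>g h. (g, h) \<in> T \<longrightarrow> (inv\<^bsub>G\<^esub> g, inv\<^bsub>F\<^esub> h) \<in> T) \<and>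
   (\<forall>g h. (g, h) \<in> T \<longrightarrow> F.\<pi> h = \<theta> (G.\<pi> g)) \<and>
   (\<forall>g h. (g, h) \<in> T \<longrightarrow> g \<in> NG \<longrightarrow> h = \<tau> g)"

definition Xs where "Xs T = G.\<pi> ` fst ` T"

lemma adm_Cs: "adm Cs"
  unfolding adm_def
proof (intro conjI allI impI)
  show "Cs \<subseteq> carrier G \<times> carrier F" unfolding Cs_def using G.N_sub F.N_sub tau_closed by auto
  show "Cs \<subseteq> Cs" by simp
next
  fix g1 h1 g2 h2 assume "(g1, h1) \<in> Cs" "(g2, h2) \<in> Cs"
  then show "(g1 \<otimes>\<^bsub>G\<^esub> g2, h1 \<otimes>\<^bsub>F\<^esub> h2) \<in> Cs" unfolding Cs_def
    using tau_mult subgroup.m_closed[OF G.sgN] by auto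
next
  fix g h assume "(g, h) \<in> Cs"
  then show "(inv\<^bsub>G\<^esub> g, inv\<^bsub>F\<^esub> h) \<in> Cs" unfolding Cs_def
    using tau_inv subgroup.m_inv_closed[OF G.sgN] by auto
next
  fix g h assume "(g, h) \<in> Cs"
  then have g: "g \<in> NG" and h: "h = \<tau> g" unfolding Cs_def by auto
  have "F.\<pi> h = \<one>\<^bsub>H\<^esub>" using F.pi_ker[of h] tau_closed[OF g] h F.N_sub by auto
  moreover have "G.\<pi> g = \<one>\<^bsub>H\<^esub>" using G.pi_ker[of g] g G.N_sub by auto
  ultimately show "F.\<pi> h = \<theta> (G.\<pi> g)" using th_one by simp
next
  fix g h assume "(g, h) \<in> Cs" "g \<in> NG"
  then show "h = \<tau> g" unfolding Cs_def by auto
qed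

lemma adm_one: "adm T \<Longrightarrow> (\<one>\<^bsub>G\<^esub>, \<one>\<^bsub>F\<^esub>) \<in> T"
  unfolding adm_def Cs_def using subgroup.one_closed[OF G.sgN] tau_one by force

lemma adm_sub: "adm T \<Longrightarrow> (a, b) \<in> T \<Longrightarrow> a \<in> carrier G \<and> b \<in> carrier F"
  unfolding adm_def by blast
lemma adm_mult: "adm T \<Longrightarrow> (g1, h1) \<in> T \<Longrightarrow> (g2, h2) \<in> T \<Longrightarrow> (g1 \<otimes>\<^bsub>G\<^esub> g2, h1 \<otimes>\<^bsub>F\<^esub> h2) \<in> T"
  unfolding adm_def by blast
lemma adm_inv: "adm T \<Longrightarrow> (g, h) \<in> T \<Longrightarrow> (inv\<^bsub>G\<^esub> g, inv\<^bsub>F\<^esub> h) \<in> T"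
  unfolding adm_def by blast
lemma adm_pi: "adm T \<Longrightarrow> (g, h) \<in> T \<Longrightarrow> F.\<pi> h = \<theta> (G.\<pi> g)"
  unfolding adm_def by blast
lemma adm_N: "adm T \<Longrightarrow> (g, h) \<in> T \<Longrightarrow> g \<in> NG \<Longrightarrow> h = \<tau> g"
  unfolding adm_def by blast
lemma adm_Cs_sub: "adm T \<Longrightarrow> x \<in> NG \<Longrightarrow> (x, \<tau> x) \<in> T"
  unfolding adm_def Cs_def by blast

lemma adm_pow: "adm T \<Longrightarrow> (g, h) \<in> T \<Longrightarrow> (g [^]\<^bsub>G\<^esub> (k::nat), h [^]\<^bsub>F\<^esub> k) \<in> T"
  by (induction k) (auto simp: adm_one adm_mult)

lemma Xs_I: "(g, h) \<in> T \<Longrightarrow> G.\<pi> g \<in> Xs T"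
  unfolding Xs_def by (metis fst_conv imageI)
lemma Xs_E: "y \<in> Xs T \<Longrightarrow> \<exists>g h. (g, h) \<in> T \<and> y = G.\<pi> g"
  unfolding Xs_def by force

lemma Xs_sub: "adm T \<Longrightarrow> Xs T \<subseteq> carrier H"
  using Xs_E adm_sub G.pi_closed by blast

lemma Xs_inv: "adm T \<Longrightarrow> y \<in> Xs T \<Longrightarrow> inv\<^bsub>H\<^esub> y \<in> Xs T"
proof -
  assume T: "adm T" and "y \<in> Xs T"
  then obtain g h where gh: "(g, h) \<in> T" "y = G.\<pi> g" using Xs_E by blast
  then have "(inv\<^bsub>G\<^esub> g, inv\<^bsub>F\<^esub> h) \<in> T" using adm_inv T by blast
  moreover have "G.\<pi> (inv\<^bsub>G\<^esub> g) = inv\<^bsub>H\<^esub> y" using G.pi_inv[of g] adm_sub[OF T gh(1)] gh(2) by simp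
  ultimately show ?thesis using Xs_I by metis
qed

lemma Xs_pow: "adm T \<Longrightarrow> y \<in> Xs T \<Longrightarrow> y [^]\<^bsub>H\<^esub> (k::nat) \<in> Xs T"
proof -
  assume T: "adm T" and "y \<in> Xs T"
  then obtain g h where gh: "(g, h) \<in> T" "y = G.\<pi> g" using Xs_E by blast
  then have "(g [^]\<^bsub>G\<^esub> k, h [^]\<^bsub>F\<^esub> k) \<in> T" using adm_pow T by blast
  moreover have "G.\<pi> (g [^]\<^bsub>G\<^esub> k) = y [^]\<^bsub>H\<^esub> k" using G.pi_pow[of g] adm_sub[OF T gh(1)] gh(2) by simp
  ultimately show ?thesis using Xs_I by metis
qed

lemma extend:
  assumes T: "adm T" and x: "x \<in> carrier H" and xT: "x \<notin> Xs T"
  shows "\<exists>S. adm S \<and> card (Xs T) < card (Xs S)"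
proof -
  obtain g0 where g0: "g0 \<in> carrier G" "G.\<pi> g0 = x" using G.pi_surj x by (metis imageE)
  obtain g where g: "g \<in> carrier G" "G.\<pi> g = x" "g [^]\<^bsub>G\<^esub> p = \<one>\<^bsub>G\<^esub>"
    using G.good_lift[OF g0(1)] g0(2) by metis
  have tx: "\<theta> x \<in> carrier H" using th_closed x by blast
  obtain h0 where h0: "h0 \<in> carrier F" "F.\<pi> h0 = \<theta> x" using F.pi_surj tx by (metis imageE)
  obtain h where h: "h \<in> carrier F" "F.\<pi> h = \<theta> x" "h [^]\<^bsub>F\<^esub> p = \<one>\<^bsub>F\<^esub>"
    using F.good_lift[OF h0(1)] h0(2) by metis
  have pik: "F.\<pi> (h [^]\<^bsub>F\<^esub> k) = \<theta> (G.\<pi> (g [^]\<^bsub>G\<^esub> k))" for k :: nat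
    using F.pi_pow[OF h(1)] G.pi_pow[OF g(1)] th_pow[OF x] h(2) g(2) by simp
  define S where "S = {(g1 \<otimes>\<^bsub>G\<^esub> g [^]\<^bsub>G\<^esub> k, h1 \<otimes>\<^bsub>F\<^esub> h [^]\<^bsub>F\<^esub> k) | g1 h1 (k::nat). (g1, h1) \<in> T}"
  have Sm: "(g1, h1) \<in> T \<Longrightarrow> (g1 \<otimes>\<^bsub>G\<^esub> g [^]\<^bsub>G\<^esub> k, h1 \<otimes>\<^bsub>F\<^esub> h [^]\<^bsub>F\<^esub> k) \<in> S" for g1 h1 and k :: nat
    unfolding S_def by blast
  have swap: "\<exists>a' b'. (a', b') \<in> T \<and> g [^]\<^bsub>G\<^esub> k \<otimes>\<^bsub>G\<^esub> a = a' \<otimes>\<^bsub>G\<^esub> g [^]\<^bsub>G\<^esub> k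
                 \<and> h [^]\<^bsub>F\<^esub> k \<otimes>\<^bsub>F\<^esub> b = b' \<otimes>\<^bsub>F\<^esub> h [^]\<^bsub>F\<^esub> k"
    if ab: "(a, b) \<in> T" for a b and k :: nat
  proof -
    have a: "a \<in> carrier G" and b: "b \<in> carrier F" using adm_sub[OF T ab] by auto
    have gk: "g [^]\<^bsub>G\<^esub> k \<in> carrier G" using g(1) by simp
    have hk: "h [^]\<^bsub>F\<^esub> k \<in> carrier F" using h(1) by simp
    define c where "c = cm G (g [^]\<^bsub>G\<^esub> k) a"
    have cN: "c \<in> NG" unfolding c_def using G.cm_in_N gk a by blast
    have cc: "c \<in> carrier G" using cN G.N_sub by blast
    have tc: "\<tau> c \<in> carrier F" using tau_closed[OF cN] F.N_sub by blast
    have c': "cm F (h [^]\<^bsub>F\<^esub> k) b = \<tau> c"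
      unfolding c_def using key[OF gk a hk b pik adm_pi[OF T ab]] .
    have "(c \<otimes>\<^bsub>G\<^esub> a, \<tau> c \<otimes>\<^bsub>F\<^esub> b) \<in> T" using adm_mult[OF T adm_Cs_sub[OF T cN] ab] .
    moreover have "g [^]\<^bsub>G\<^esub> k \<otimes>\<^bsub>G\<^esub> a = c \<otimes>\<^bsub>G\<^esub> a \<otimes>\<^bsub>G\<^esub> g [^]\<^bsub>G\<^esub> k"
      unfolding c_def using G.cm_swap[OF gk a] .
    moreover have "h [^]\<^bsub>F\<^esub> k \<otimes>\<^bsub>F\<^esub> b = \<tau> c \<otimes>\<^bsub>F\<^esub> b \<otimes>\<^bsub>F\<^esub> h [^]\<^bsub>F\<^esub> k"
      using F.cm_swap[OF hk b] c' by simp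
    ultimately show ?thesis by blast
  qed
  have admS: "adm S"
    unfolding adm_def
  proof (intro conjI allI impI)
    show "S \<subseteq> carrier G \<times> carrier F" unfolding S_def using adm_sub[OF T] g h by auto
  next
    show "Cs \<subseteq> S"
    proof
      fix z assume "z \<in> Cs"
      then have zT: "z \<in> T" using T unfolding adm_def by blast
      obtain a b where z: "z = (a, b)" by (cases z)
      have ab: "(a, b) \<in> T" using zT z by simp
      have "(a \<otimes>\<^bsub>G\<^esub> g [^]\<^bsub>G\<^esub> (0::nat), b \<otimes>\<^bsub>F\<^esub> h [^]\<^bsub>F\<^esub> (0::nat)) \<in> S" using Sm[OF ab] .
      then show "z \<in> S" using z adm_sub[OF T ab] by simp
    qed
  next
    fix g1 h1 g2 h2 assume s1: "(g1, h1) \<in> S" and s2: "(g2, h2) \<in> S"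
    obtain a1 b1 and k :: nat where e1: "g1 = a1 \<otimes>\<^bsub>G\<^esub> g [^]\<^bsub>G\<^esub> k" "h1 = b1 \<otimes>\<^bsub>F\<^esub> h [^]\<^bsub>F\<^esub> k" "(a1, b1) \<in> T"
      using s1 unfolding S_def by blast
    obtain a2 b2 and l :: nat where e2: "g2 = a2 \<otimes>\<^bsub>G\<^esub> g [^]\<^bsub>G\<^esub> l" "h2 = b2 \<otimes>\<^bsub>F\<^esub> h [^]\<^bsub>F\<^esub> l" "(a2, b2) \<in> T"
      using s2 unfolding S_def by blast
    obtain a' b' where sw: "(a', b') \<in> T" "g [^]\<^bsub>G\<^esub> k \<otimes>\<^bsub>G\<^esub> a2 = a' \<otimes>\<^bsub>G\<^esub> g [^]\<^bsub>G\<^esub> k"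
         "h [^]\<^bsub>F\<^esub> k \<otimes>\<^bsub>F\<^esub> b2 = b' \<otimes>\<^bsub>F\<^esub> h [^]\<^bsub>F\<^esub> k"
      using swap[OF e2(3)] by blast
    have c1: "a1 \<in> carrier G" "b1 \<in> carrier F" using adm_sub[OF T e1(3)] by auto
    have c2: "a2 \<in> carrier G" "b2 \<in> carrier F" using adm_sub[OF T e2(3)] by auto
    have c3: "a' \<in> carrier G" "b' \<in> carrier F" using adm_sub[OF T sw(1)] by auto
    have "g1 \<otimes>\<^bsub>G\<^esub> g2 = a1 \<otimes>\<^bsub>G\<^esub> (g [^]\<^bsub>G\<^esub> k \<otimes>\<^bsub>G\<^esub> a2) \<otimes>\<^bsub>G\<^esub> g [^]\<^bsub>G\<^esub> l"
      using e1 e2 c1 c2 g by (simp add: G.m_assoc)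
    also have "\<dots> = (a1 \<otimes>\<^bsub>G\<^esub> a') \<otimes>\<^bsub>G\<^esub> g [^]\<^bsub>G\<^esub> (k + l)"
      using sw(2) c1 c3 g by (simp add: G.m_assoc G.nat_pow_mult[symmetric])
    finally have eg: "g1 \<otimes>\<^bsub>G\<^esub> g2 = (a1 \<otimes>\<^bsub>G\<^esub> a') \<otimes>\<^bsub>G\<^esub> g [^]\<^bsub>G\<^esub> (k + l)" .
    have "h1 \<otimes>\<^bsub>F\<^esub> h2 = b1 \<otimes>\<^bsub>F\<^esub> (h [^]\<^bsub>F\<^esub> k \<otimes>\<^bsub>F\<^esub> b2) \<otimes>\<^bsub>F\<^esub> h [^]\<^bsub>F\<^esub> l"
      using e1 e2 c1 c2 h by (simp add: F.m_assoc)
    also have "\<dots> = (b1 \<otimes>\<^bsub>F\<^esub> b') \<otimes>\<^bsub>F\<^esub> h [^]\<^bsub>F\<^esub> (k + l)"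
      using sw(3) c1 c3 h by (simp add: F.m_assoc F.nat_pow_mult[symmetric])
    finally have eh: "h1 \<otimes>\<^bsub>F\<^esub> h2 = (b1 \<otimes>\<^bsub>F\<^esub> b') \<otimes>\<^bsub>F\<^esub> h [^]\<^bsub>F\<^esub> (k + l)" .
    show "(g1 \<otimes>\<^bsub>G\<^esub> g2, h1 \<otimes>\<^bsub>F\<^esub> h2) \<in> S"
      unfolding eg eh using Sm[OF adm_mult[OF T e1(3) sw(1)]] .
  next
    fix g1 h1 assume s1: "(g1, h1) \<in> S"
    obtain a1 b1 and k :: nat where e1: "g1 = a1 \<otimes>\<^bsub>G\<^esub> g [^]\<^bsub>G\<^esub> k" "h1 = b1 \<otimes>\<^bsub>F\<^esub> h [^]\<^bsub>F\<^esub> k" "(a1, b1) \<in> T"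
      using s1 unfolding S_def by blast
    have c1: "a1 \<in> carrier G" "b1 \<in> carrier F" using adm_sub[OF T e1(3)] by auto
    have ia: "(inv\<^bsub>G\<^esub> a1, inv\<^bsub>F\<^esub> b1) \<in> T" using adm_inv[OF T e1(3)] .
    define q where "q = k * (p - 1)"
    obtain a' b' where sw: "(a', b') \<in> T" "g [^]\<^bsub>G\<^esub> q \<otimes>\<^bsub>G\<^esub> inv\<^bsub>G\<^esub> a1 = a' \<otimes>\<^bsub>G\<^esub> g [^]\<^bsub>G\<^esub> q"
         "h [^]\<^bsub>F\<^esub> q \<otimes>\<^bsub>F\<^esub> inv\<^bsub>F\<^esub> b1 = b' \<otimes>\<^bsub>F\<^esub> h [^]\<^bsub>F\<^esub> q"
      using swap[OF ia] by blast
    have "inv\<^bsub>G\<^esub> g1 = g [^]\<^bsub>G\<^esub> q \<otimes>\<^bsub>G\<^esub> inv\<^bsub>G\<^esub> a1"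
      using e1 c1 g G.inv_mult_group G.pow_inv_p[OF g(1) g(3) G.p_pos] unfolding q_def by simp
    moreover have "inv\<^bsub>F\<^esub> h1 = h [^]\<^bsub>F\<^esub> q \<otimes>\<^bsub>F\<^esub> inv\<^bsub>F\<^esub> b1"
      using e1 c1 h F.inv_mult_group F.pow_inv_p[OF h(1) h(3) G.p_pos] unfolding q_def by simp
    ultimately show "(inv\<^bsub>G\<^esub> g1, inv\<^bsub>F\<^esub> h1) \<in> S" using sw Sm by simp
  next
    fix g1 h1 assume s1: "(g1, h1) \<in> S"
    obtain a1 b1 and k :: nat where e1: "g1 = a1 \<otimes>\<^bsub>G\<^esub> g [^]\<^bsub>G\<^esub> k" "h1 = b1 \<otimes>\<^bsub>F\<^esub> h [^]\<^bsub>F\<^esub> k" "(a1, b1) \<in> T"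
      using s1 unfolding S_def by blast
    have c1: "a1 \<in> carrier G" "b1 \<in> carrier F" using adm_sub[OF T e1(3)] by auto
    have "F.\<pi> h1 = F.\<pi> b1 \<otimes>\<^bsub>H\<^esub> F.\<pi> (h [^]\<^bsub>F\<^esub> k)" using e1 c1 h F.pi_mult by simp
    also have "\<dots> = \<theta> (G.\<pi> a1) \<otimes>\<^bsub>H\<^esub> \<theta> (G.\<pi> (g [^]\<^bsub>G\<^esub> k))" using adm_pi[OF T e1(3)] pik by simp
    also have "\<dots> = \<theta> (G.\<pi> g1)" using e1 c1 g th_mult G.pi_mult G.pi_closed by simp
    finally show "F.\<pi> h1 = \<theta> (G.\<pi> g1)" .
  next
    fix g1 h1 assume s1: "(g1, h1) \<in> S" and gN: "g1 \<in> NG"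
    obtain a1 b1 and k :: nat where e1: "g1 = a1 \<otimes>\<^bsub>G\<^esub> g [^]\<^bsub>G\<^esub> k" "h1 = b1 \<otimes>\<^bsub>F\<^esub> h [^]\<^bsub>F\<^esub> k" "(a1, b1) \<in> T"
      using s1 unfolding S_def by blast
    have c1: "a1 \<in> carrier G" "b1 \<in> carrier F" using adm_sub[OF T e1(3)] by auto
    show "h1 = \<tau> g1"
    proof (cases "p dvd k")
      case True
      then obtain q where k: "k = p * q" by blast
      have "g [^]\<^bsub>G\<^esub> k = \<one>\<^bsub>G\<^esub>" using g k by (simp add: G.nat_pow_pow[symmetric])
      moreover have "h [^]\<^bsub>F\<^esub> k = \<one>\<^bsub>F\<^esub>" using h k by (simp add: F.nat_pow_pow[symmetric])
      ultimately show ?thesis using e1 c1 gN adm_N[OF T e1(3)] by simp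
    next
      case False
      obtain a b where ab: "k * a = p * b + 1" using bez_prime[OF G.prime_p False] by blast
      have "G.\<pi> g1 = \<one>\<^bsub>H\<^esub>" using G.pi_ker gN G.N_sub by blast
      then have "G.\<pi> a1 \<otimes>\<^bsub>H\<^esub> x [^]\<^bsub>H\<^esub> k = \<one>\<^bsub>H\<^esub>" using e1 c1 g G.pi_mult G.pi_pow by simp
      then have "x [^]\<^bsub>H\<^esub> k = inv\<^bsub>H\<^esub> G.\<pi> a1"
        using group.inv_equality[OF Hm_group] Hm_comm G.pi_closed c1 x
        by (metis group.inv_inv[OF Hm_group] group.inv_closed[OF Hm_group] monoid.nat_pow_closed[OF group.is_monoid[OF Hm_group]])
      moreover have "inv\<^bsub>H\<^esub> G.\<pi> a1 \<in> Xs T" using Xs_inv[OF T Xs_I[OF e1(3)]] .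
      ultimately have "(x [^]\<^bsub>H\<^esub> k) [^]\<^bsub>H\<^esub> a \<in> Xs T" using Xs_pow[OF T] by simp
      moreover have "(x [^]\<^bsub>H\<^esub> k) [^]\<^bsub>H\<^esub> a = x"
        using group.pow_bez[OF Hm_group x Hm_pow_p[OF G.p_pos x] ab] .
      ultimately show ?thesis using xT by simp
    qed
  qed
  have sub: "Xs T \<subseteq> Xs S"
  proof
    fix y assume "y \<in> Xs T"
    then obtain a b where ab: "(a, b) \<in> T" "y = G.\<pi> a" using Xs_E by blast
    have "(a \<otimes>\<^bsub>G\<^esub> g [^]\<^bsub>G\<^esub> (0::nat), b \<otimes>\<^bsub>F\<^esub> h [^]\<^bsub>F\<^esub> (0::nat)) \<in> S" using Sm[OF ab(1)] .
    then show "y \<in> Xs S" using ab adm_sub[OF T ab(1)] Xs_I by fastforce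
  qed
  have "(\<one>\<^bsub>G\<^esub> \<otimes>\<^bsub>G\<^esub> g [^]\<^bsub>G\<^esub> (1::nat), \<one>\<^bsub>F\<^esub> \<otimes>\<^bsub>F\<^esub> h [^]\<^bsub>F\<^esub> (1::nat)) \<in> S"
    using Sm[OF adm_one[OF T]] .
  then have "x \<in> Xs S" using Xs_I g h by fastforce
  then have "Xs T \<subset> Xs S" using sub xT by blast
  moreover have "finite (Xs S)" using Xs_sub[OF admS] Hm_finite[OF G.p_pos] finite_subset by blast
  ultimately show ?thesis using admS psubset_card_mono by blast
qed

lemma exists_full: "\<exists>T. adm T \<and> Xs T = carrier H"
proof -
  have b: "\<forall>T. adm T \<longrightarrow> card (Xs T) < Suc (card (carrier H))"
    using Xs_sub Hm_finite[OF G.p_pos] card_mono by (metis less_Suc_eq_le)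
  obtain T where T: "adm T" and mx: "\<forall>S. adm S \<longrightarrow> card (Xs S) \<le> card (Xs T)"
    using ex_has_greatest_nat[of adm Cs "\<lambda>T. card (Xs T)", OF adm_Cs b] by blast
  have "Xs T = carrier H"
  proof (rule ccontr)
    assume "Xs T \<noteq> carrier H"
    then obtain x where "x \<in> carrier H" "x \<notin> Xs T" using Xs_sub[OF T] by blast
    then show False using extend[OF T] mx by (meson not_le)
  qed
  then show ?thesis using T by blast
qed

lemma backward: "G \<cong> F"
proof -
  obtain T where T: "adm T" and full: "Xs T = carrier H" using exists_full by blast
  have ex: "\<exists>h. (g, h) \<in> T" if g: "g \<in> carrier G" for g
  proof -
    have "G.\<pi> g \<in> Xs T" using full G.pi_closed g by blast
    then obtain g' h' where gh: "(g', h') \<in> T" "G.\<pi> g = G.\<pi> g'" using Xs_E by blast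
    have c: "g' \<in> carrier G" "h' \<in> carrier F" using adm_sub[OF T gh(1)] by auto
    define u where "u = g \<otimes>\<^bsub>G\<^esub> inv\<^bsub>G\<^esub> g'"
    have "inv\<^bsub>G\<^esub> g' \<otimes>\<^bsub>G\<^esub> g \<in> NG" using G.pi_eq c g gh(2) by metis
    then have uN: "u \<in> NG" unfolding u_def using G.nrm normal.inv_op_closed1 c g
      by (metis G.inv_closed G.inv_inv G.m_assoc G.m_closed G.r_inv G.r_one normal.inv_op_closed2)
    have "(u \<otimes>\<^bsub>G\<^esub> g', \<tau> u \<otimes>\<^bsub>F\<^esub> h') \<in> T" using adm_mult[OF T adm_Cs_sub[OF T uN] gh(1)] .
    moreover have "u \<otimes>\<^bsub>G\<^esub> g' = g" unfolding u_def using c g by (simp add: G.m_assoc)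
    ultimately show ?thesis by auto
  qed
  have un: "h = h'" if "(g, h) \<in> T" "(g, h') \<in> T" for g h h'
  proof -
    have c: "g \<in> carrier G" "h \<in> carrier F" "h' \<in> carrier F" using adm_sub[OF T] that by auto
    have "(g \<otimes>\<^bsub>G\<^esub> inv\<^bsub>G\<^esub> g, h \<otimes>\<^bsub>F\<^esub> inv\<^bsub>F\<^esub> h') \<in> T" using adm_mult[OF T that(1) adm_inv[OF T that(2)]] .
    then have "(\<one>\<^bsub>G\<^esub>, h \<otimes>\<^bsub>F\<^esub> inv\<^bsub>F\<^esub> h') \<in> T" using c by simp
    then have "h \<otimes>\<^bsub>F\<^esub> inv\<^bsub>F\<^esub> h' = \<one>\<^bsub>F\<^esub>" using adm_N[OF T] subgroup.one_closed[OF G.sgN] tau_one by metis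
    then show ?thesis using c F.inv_solve_right' by (metis F.l_one F.one_closed)
  qed
  define \<Phi> where "\<Phi> g = (THE h. (g, h) \<in> T)" for g
  have Phi: "(g, \<Phi> g) \<in> T" if "g \<in> carrier G" for g
    unfolding \<Phi>_def using ex[OF that] un by (metis theI)
  have Phi_eq: "\<Phi> g = h" if "(g, h) \<in> T" for g h
    using Phi un that adm_sub[OF T] by blast
  have Phic: "\<Phi> g \<in> carrier F" if "g \<in> carrier G" for g using Phi[OF that] adm_sub[OF T] by blast
  have hom: "\<Phi> \<in> hom G F"
    unfolding hom_def using Phic Phi_eq adm_mult[OF T Phi Phi] by auto
  have inj: "inj_on \<Phi> (carrier G)"
  proof (rule inj_onI)
    fix a b assume a: "a \<in> carrier G" and b: "b \<in> carrier G" and e: "\<Phi> a = \<Phi> b"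
    have "(a \<otimes>\<^bsub>G\<^esub> inv\<^bsub>G\<^esub> b, \<Phi> a \<otimes>\<^bsub>F\<^esub> inv\<^bsub>F\<^esub> \<Phi> b) \<in> T"
      using adm_mult[OF T Phi[OF a] adm_inv[OF T Phi[OF b]]] .
    then have ab: "(a \<otimes>\<^bsub>G\<^esub> inv\<^bsub>G\<^esub> b, \<one>\<^bsub>F\<^esub>) \<in> T" using e Phic b by simp
    have abc: "a \<otimes>\<^bsub>G\<^esub> inv\<^bsub>G\<^esub> b \<in> carrier G" using a b by simp
    have "\<theta> (G.\<pi> (a \<otimes>\<^bsub>G\<^esub> inv\<^bsub>G\<^esub> b)) = \<theta> \<one>\<^bsub>H\<^esub>"
      using adm_pi[OF T ab] F.pi_one th_one by simp
    then have "G.\<pi> (a \<otimes>\<^bsub>G\<^esub> inv\<^bsub>G\<^esub> b) = \<one>\<^bsub>H\<^esub>"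
      using th_inj G.pi_closed[OF abc] monoid.one_closed[OF group.is_monoid[OF Hm_group]] inj_onD by metis
    then have N: "a \<otimes>\<^bsub>G\<^esub> inv\<^bsub>G\<^esub> b \<in> NG" using G.pi_ker abc by blast
    then have "\<tau> (a \<otimes>\<^bsub>G\<^esub> inv\<^bsub>G\<^esub> b) = \<tau> \<one>\<^bsub>G\<^esub>" using adm_N[OF T ab] tau_one by simp
    then have "a \<otimes>\<^bsub>G\<^esub> inv\<^bsub>G\<^esub> b = \<one>\<^bsub>G\<^esub>"
      using tau_bij N subgroup.one_closed[OF G.sgN] unfolding bij_betw_def by (meson inj_onD)
    then show "a = b" using a b G.inv_solve_right' by (metis G.l_one G.one_closed)
  qed
  have surj: "\<Phi> ` carrier G = carrier F"
  proof
    show "\<Phi> ` carrier G \<subseteq> carrier F" using Phic by blast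
  next
    show "carrier F \<subseteq> \<Phi> ` carrier G"
    proof
      fix h assume h: "h \<in> carrier F"
      have "F.\<pi> h \<in> \<theta> ` carrier H" using th_surj F.pi_closed h by blast
      then obtain y where y: "y \<in> carrier H" "\<theta> y = F.\<pi> h" by (metis imageE)
      obtain g where g: "g \<in> carrier G" "G.\<pi> g = y" using G.pi_surj y by (metis imageE)
      have e: "F.\<pi> (\<Phi> g) = F.\<pi> h" using adm_pi[OF T Phi[OF g(1)]] g y by simp
      define mm where "mm = inv\<^bsub>F\<^esub> \<Phi> g \<otimes>\<^bsub>F\<^esub> h"
      have mN: "mm \<in> NF" unfolding mm_def using F.pi_eq[OF Phic[OF g(1)] h] e by simp
      then obtain u where u: "u \<in> NG" "\<tau> u = mm" using bij_betw_imp_surj_on[OF tau_bij] by (metis imageE)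
      have uc: "u \<in> carrier G" using u G.N_sub by blast
      have "(g \<otimes>\<^bsub>G\<^esub> u, \<Phi> g \<otimes>\<^bsub>F\<^esub> \<tau> u) \<in> T" using adm_mult[OF T Phi[OF g(1)] adm_Cs_sub[OF T u(1)]] .
      moreover have "\<Phi> g \<otimes>\<^bsub>F\<^esub> \<tau> u = h" using u mm_def Phic[OF g(1)] h by (simp add: F.m_assoc[symmetric])
      ultimately have "\<Phi> (g \<otimes>\<^bsub>G\<^esub> u) = h" using Phi_eq by simp
      then show "h \<in> \<Phi> ` carrier G" using g uc by (metis G.m_closed imageI)
    qed
  qed
  have "\<Phi> \<in> iso G F" using hom inj surj by (simp add: iso_iff)
  then show ?thesis by (rule is_isoI)
qed

end

lemma das_image:
  assumes gh: "group_hom G F \<Phi>" and K: "divisible_abelian_subgroup G K"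
  shows "divisible_abelian_subgroup F (\<Phi> ` K)"
proof -
  have sK: "subgroup K G" using K divisible_abelian_subgroup_def by blast
  have Kc: "K \<subseteq> carrier G" using subgroup.subset[OF sK] .
  have hm: "\<Phi> (a \<otimes>\<^bsub>G\<^esub> b) = \<Phi> a \<otimes>\<^bsub>F\<^esub> \<Phi> b" if "a \<in> carrier G" "b \<in> carrier G" for a b
    using group_hom.hom_mult[OF gh] that by blast
  show ?thesis unfolding divisible_abelian_subgroup_def
  proof (intro conjI ballI allI impI)
    show "subgroup (\<Phi> ` K) F" using group_hom.subgroup_img_is_subgroup[OF gh sK] .
  next
    fix a b assume "a \<in> \<Phi> ` K" "b \<in> \<Phi> ` K"
    then obtain a0 b0 where "a0 \<in> K" "b0 \<in> K" "a = \<Phi> a0" "b = \<Phi> b0" by blast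
    moreover have "a0 \<otimes>\<^bsub>G\<^esub> b0 = b0 \<otimes>\<^bsub>G\<^esub> a0" using K calculation unfolding divisible_abelian_subgroup_def by blast
    ultimately show "a \<otimes>\<^bsub>F\<^esub> b = b \<otimes>\<^bsub>F\<^esub> a" using hm Kc by (metis subsetD)
  next
    fix x and k :: nat assume "x \<in> \<Phi> ` K" "0 < k"
    then obtain x0 where x0: "x0 \<in> K" "x = \<Phi> x0" by blast
    then obtain y where y: "y \<in> K" "y [^]\<^bsub>G\<^esub> k = x0" using K \<open>0 < k\<close> unfolding divisible_abelian_subgroup_def by blast
    have "\<Phi> y [^]\<^bsub>F\<^esub> k = x" using group_hom.hom_nat_pow[OF gh, of y k] y x0 Kc by auto
    then show "\<exists>y\<in>\<Phi> ` K. y [^]\<^bsub>F\<^esub> k = x" using y by blast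
  qed
qed

locale FW = G: NC G p n m NG \<phi>G \<psi>G + F: NC F p n m NF \<phi>F \<psi>F
  for G :: "('a, 'b) monoid_scheme" and F :: "('c, 'd) monoid_scheme"
    and p n m NG \<phi>G \<psi>G NF \<phi>F \<psi>F +
  fixes \<Phi>
  assumes Phi: "\<Phi> \<in> iso G F"
begin

abbreviation "H \<equiv> Hm p m"

lemma gh: "group_hom G F \<Phi>"
  using Phi by (simp add: group_hom_def group_hom_axioms_def G.grp F.grp iso_imp_homomorphism)
lemma Phi_mult: "a \<in> carrier G \<Longrightarrow> b \<in> carrier G \<Longrightarrow> \<Phi> (a \<otimes>\<^bsub>G\<^esub> b) = \<Phi> a \<otimes>\<^bsub>F\<^esub> \<Phi> b"
  using group_hom.hom_mult[OF gh] by blast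
lemma Phi_inv: "a \<in> carrier G \<Longrightarrow> \<Phi> (inv\<^bsub>G\<^esub> a) = inv\<^bsub>F\<^esub> \<Phi> a"
  using group_hom.hom_inv[OF gh] by blast
lemma Phi_closed: "a \<in> carrier G \<Longrightarrow> \<Phi> a \<in> carrier F"
  using Phi by (auto simp: iso_def hom_def)
lemma Phi_inj: "inj_on \<Phi> (carrier G)" using Phi by (simp add: iso_iff)
lemma Phi_surj: "\<Phi> ` carrier G = carrier F" using Phi by (simp add: iso_iff)

lemma Phi_N: "\<Phi> ` NG = NF"
proof
  show "\<Phi> ` NG \<subseteq> NF"
    using das_image[OF gh G.dasN] F.bottom unfolding is_bottom_def by blast
next
  have Pinv: "inv_into (carrier G) \<Phi> \<in> iso F G" using G.iso_set_sym[OF Phi] .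
  have gh': "group_hom F G (inv_into (carrier G) \<Phi>)"
    using Pinv by (simp add: group_hom_def group_hom_axioms_def G.grp F.grp iso_imp_homomorphism)
  have sub: "inv_into (carrier G) \<Phi> ` NF \<subseteq> NG"
    using das_image[OF gh' F.dasN] G.bottom unfolding is_bottom_def by blast
  show "NF \<subseteq> \<Phi> ` NG"
  proof
    fix h assume h: "h \<in> NF"
    then have hc: "h \<in> \<Phi> ` carrier G" using F.N_sub Phi_surj by blast
    have "\<Phi> (inv_into (carrier G) \<Phi> h) = h" using f_inv_into_f[OF hc] .
    moreover have "inv_into (carrier G) \<Phi> h \<in> NG" using sub h by blast
    ultimately show "h \<in> \<Phi> ` NG" by (metis imageI)
  qed
qed

lemma Phi_N_iff: "g \<in> carrier G \<Longrightarrow> \<Phi> g \<in> NF \<longleftrightarrow> g \<in> NG"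
proof
  assume g: "g \<in> carrier G" and "\<Phi> g \<in> NF"
  then obtain g' where "g' \<in> NG" "\<Phi> g = \<Phi> g'" using Phi_N by (metis imageE)
  then show "g \<in> NG" using Phi_inj g G.N_sub inj_onD by (metis subsetD)
next
  assume "g \<in> NG" then show "\<Phi> g \<in> NF" using Phi_N by blast
qed

definition \<sigma> where "\<sigma> = \<phi>F \<circ> (\<Phi> \<circ> inv_into NG \<phi>G)"

lemma sig_iso: "\<sigma> \<in> iso (Mn p n) (Mn p n)"
proof -
  have gG: "group (G\<lparr>carrier := NG\<rparr>)" using G.subgroup_imp_group[OF G.sgN] .
  have "inv_into (carrier (G\<lparr>carrier := NG\<rparr>)) \<phi>G \<in> iso (Mn p n) (G\<lparr>carrier := NG\<rparr>)"
    using group.iso_set_sym[OF gG G.phi_iso] .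
  then have i: "inv_into NG \<phi>G \<in> iso (Mn p n) (G\<lparr>carrier := NG\<rparr>)" by simp
  have P: "\<Phi> \<in> iso (G\<lparr>carrier := NG\<rparr>) (F\<lparr>carrier := NF\<rparr>)"
  proof (rule isoI)
    show "\<Phi> \<in> hom (G\<lparr>carrier := NG\<rparr>) (F\<lparr>carrier := NF\<rparr>)"
      unfolding hom_def using Phi_N Phi_mult G.N_sub by auto
    show "bij_betw \<Phi> (carrier (G\<lparr>carrier := NG\<rparr>)) (carrier (F\<lparr>carrier := NF\<rparr>))"
      unfolding bij_betw_def using Phi_N inj_on_subset[OF Phi_inj G.N_sub] by simp
  qed
  show ?thesis unfolding \<sigma>_def using iso_set_trans[OF iso_set_trans[OF i P] F.phi_iso] .
qed

definition \<rho> where "\<rho> g = F.\<pi> (\<Phi> g)"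

lemma rho_resp: "a \<in> carrier G \<Longrightarrow> b \<in> carrier G \<Longrightarrow> \<rho> a = \<rho> b \<longleftrightarrow> G.\<pi> a = G.\<pi> b"
proof -
  assume a: "a \<in> carrier G" and b: "b \<in> carrier G"
  have "\<rho> a = \<rho> b \<longleftrightarrow> inv\<^bsub>F\<^esub> \<Phi> a \<otimes>\<^bsub>F\<^esub> \<Phi> b \<in> NF"
    unfolding \<rho>_def using F.pi_eq Phi_closed a b by blast
  also have "inv\<^bsub>F\<^esub> \<Phi> a \<otimes>\<^bsub>F\<^esub> \<Phi> b = \<Phi> (inv\<^bsub>G\<^esub> a \<otimes>\<^bsub>G\<^esub> b)" using a b Phi_mult Phi_inv by simp
  also have "\<Phi> (inv\<^bsub>G\<^esub> a \<otimes>\<^bsub>G\<^esub> b) \<in> NF \<longleftrightarrow> inv\<^bsub>G\<^esub> a \<otimes>\<^bsub>G\<^esub> b \<in> NG" using Phi_N_iff a b by simp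
  also have "\<dots> \<longleftrightarrow> G.\<pi> a = G.\<pi> b" using G.pi_eq a b by simp
  finally show ?thesis .
qed

definition \<theta> where "\<theta> x = \<rho> (lift G NG \<psi>G x)"

lemma th_iso: "\<theta> \<in> iso H H"
proof -
  have L: "lift G NG \<psi>G x \<in> carrier G \<and> G.\<pi> (lift G NG \<psi>G x) = x" if "x \<in> carrier H" for x
    using G.lift_spec that by blast
  have hom: "\<theta> \<in> hom H H"
    unfolding hom_def
  proof (intro CollectI conjI ballI)
    show "\<theta> \<in> carrier H \<rightarrow> carrier H"
      unfolding \<theta>_def \<rho>_def using L F.pi_closed Phi_closed by auto
  next
    fix x y assume x: "x \<in> carrier H" and y: "y \<in> carrier H"
    have xy: "x \<otimes>\<^bsub>H\<^esub> y \<in> carrier H" using monoid.m_closed[OF group.is_monoid[OF Hm_group] x y] .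
    have lc: "lift G NG \<psi>G x \<otimes>\<^bsub>G\<^esub> lift G NG \<psi>G y \<in> carrier G" using L x y by simp
    have "\<theta> (x \<otimes>\<^bsub>H\<^esub> y) = \<rho> (lift G NG \<psi>G x \<otimes>\<^bsub>G\<^esub> lift G NG \<psi>G y)"
      unfolding \<theta>_def using rho_resp L[OF xy] lc L[OF x] L[OF y] G.pi_mult by metis
    also have "\<dots> = \<theta> x \<otimes>\<^bsub>H\<^esub> \<theta> y"
      unfolding \<theta>_def \<rho>_def using L[OF x] L[OF y] Phi_mult Phi_closed F.pi_mult by simp
    finally show "\<theta> (x \<otimes>\<^bsub>H\<^esub> y) = \<theta> x \<otimes>\<^bsub>H\<^esub> \<theta> y" .
  qed
  have inj: "inj_on \<theta> (carrier H)"
  proof (rule inj_onI)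
    fix x y assume x: "x \<in> carrier H" and y: "y \<in> carrier H" and e: "\<theta> x = \<theta> y"
    then show "x = y" unfolding \<theta>_def using rho_resp L[OF x] L[OF y] by metis
  qed
  have surj: "\<theta> ` carrier H = carrier H"
  proof
    show "\<theta> ` carrier H \<subseteq> carrier H" using hom unfolding hom_def by auto
  next
    show "carrier H \<subseteq> \<theta> ` carrier H"
    proof
      fix y assume y: "y \<in> carrier H"
      then obtain h where h: "h \<in> carrier F" "F.\<pi> h = y" using F.pi_surj by (metis imageE)
      then obtain g where g: "g \<in> carrier G" "\<Phi> g = h" using Phi_surj by (metis imageE)
      have x: "G.\<pi> g \<in> carrier H" using G.pi_closed g by blast
      have "\<theta> (G.\<pi> g) = \<rho> g" unfolding \<theta>_def using rho_resp L[OF x] g by metis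
      also have "\<dots> = y" unfolding \<rho>_def using g h by simp
      finally show "y \<in> \<theta> ` carrier H" using x by (metis imageI)
    qed
  qed
  show ?thesis using hom inj surj by (simp add: iso_iff)
qed

lemma Phi_cm: "a \<in> carrier G \<Longrightarrow> b \<in> carrier G \<Longrightarrow> \<Phi> (cm G a b) = cm F (\<Phi> a) (\<Phi> b)"
  unfolding cm_def by (simp add: Phi_mult Phi_inv)

lemma cond:
  assumes x: "x \<in> carrier H" and y: "y \<in> carrier H"
  shows "commutator_function F NF \<phi>F \<psi>F (\<theta> x) (\<theta> y) = \<sigma> (commutator_function G NG \<phi>G \<psi>G x y)"
proof -
  define lx where "lx = lift G NG \<psi>G x"
  define ly where "ly = lift G NG \<psi>G y"
  have lx: "lx \<in> carrier G" "G.\<pi> lx = x" using G.lift_spec[OF x] lx_def by auto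
  have ly: "ly \<in> carrier G" "G.\<pi> ly = y" using G.lift_spec[OF y] ly_def by auto
  have cN: "cm G lx ly \<in> NG" using G.cm_in_N lx ly by blast
  have "commutator_function F NF \<phi>F \<psi>F (\<theta> x) (\<theta> y) = \<phi>F (cm F (\<Phi> lx) (\<Phi> ly))"
    unfolding \<theta>_def \<rho>_def lx_def[symmetric] ly_def[symmetric]
    using F.cf_eq Phi_closed lx ly by blast
  also have "\<dots> = \<phi>F (\<Phi> (cm G lx ly))" using Phi_cm lx ly by simp
  also have "\<dots> = \<sigma> (\<phi>G (cm G lx ly))"
    unfolding \<sigma>_def using cN inv_into_f_f[OF _ cN] G.phi_bij unfolding bij_betw_def by simp
  also have "\<phi>G (cm G lx ly) = commutator_function G NG \<phi>G \<psi>G x y"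
    using G.cf_eq[OF lx(1) ly(1)] lx ly by simp
  finally show ?thesis .
qed

end

theorem theorem1p2:
  fixes G :: "('a, 'b) monoid_scheme" and F :: "('c, 'd) monoid_scheme"
    and p n m :: nat
    and NG :: "'a set" and \<phi>G :: "'a \<Rightarrow> nat \<Rightarrow> rat" and \<psi>G :: "'a set \<Rightarrow> nat \<Rightarrow> int"
    and NF :: "'c set" and \<phi>F :: "'c \<Rightarrow> nat \<Rightarrow> rat" and \<psi>F :: "'c set \<Rightarrow> nat \<Rightarrow> int"
  assumes "Factorial_Ring.prime p"
    and "nilpotent_chernikov G p n m NG \<phi>G \<psi>G"
    and "nilpotent_chernikov F p n m NF \<phi>F \<psi>F"
  shows "G \<cong> F \<longleftrightarrow>
    (\<exists>\<sigma> \<theta>. \<sigma> \<in> iso (Mn p n) (Mn p n) \<and> \<theta> \<in> iso (Hm p m) (Hm p m) \<and>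
       (\<forall>x\<in>carrier (Hm p m). \<forall>y\<in>carrier (Hm p m).
          commutator_function F NF \<phi>F \<psi>F (\<theta> x) (\<theta> y) =
          \<sigma> (commutator_function G NG \<phi>G \<psi>G x y)))"
proof
  assume "G \<cong> F"
  then obtain \<Phi> where \<Phi>: "\<Phi> \<in> iso G F" unfolding is_iso_def by blast
  interpret FW G F p n m NG \<phi>G \<psi>G NF \<phi>F \<psi>F \<Phi>
    using assms \<Phi> by (simp add: FW_def NC_def FW_axioms_def)
  show "\<exists>\<sigma> \<theta>. \<sigma> \<in> iso (Mn p n) (Mn p n) \<and> \<theta> \<in> iso (Hm p m) (Hm p m) \<and>
       (\<forall>x\<in>carrier (Hm p m). \<forall>y\<in>carrier (Hm p m).
          commutator_function F NF \<phi>F \<psi>F (\<theta> x) (\<theta> y) =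
          \<sigma> (commutator_function G NG \<phi>G \<psi>G x y))"
    using sig_iso th_iso cond by blast
next
  assume "\<exists>\<sigma> \<theta>. \<sigma> \<in> iso (Mn p n) (Mn p n) \<and> \<theta> \<in> iso (Hm p m) (Hm p m) \<and>
       (\<forall>x\<in>carrier (Hm p m). \<forall>y\<in>carrier (Hm p m).
          commutator_function F NF \<phi>F \<psi>F (\<theta> x) (\<theta> y) =
          \<sigma> (commutator_function G NG \<phi>G \<psi>G x y))"
  then obtain \<sigma> \<theta> where st: "\<sigma> \<in> iso (Mn p n) (Mn p n)" "\<theta> \<in> iso (Hm p m) (Hm p m)"
    "\<forall>x\<in>carrier (Hm p m). \<forall>y\<in>carrier (Hm p m).
          commutator_function F NF \<phi>F \<psi>F (\<theta> x) (\<theta> y) =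
          \<sigma> (commutator_function G NG \<phi>G \<psi>G x y)" by blast
  interpret BW G F p n m NG \<phi>G \<psi>G NF \<phi>F \<psi>F \<sigma> \<theta>
    using assms st by (simp add: BW_def NC_def BW_axioms_def)
  show "G \<cong> F" using backward .
qed


end
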